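(* Let $(X,p)$ and $(Y,d)$ be metric spaces with $(Y,d)$ separable, and let $F: X \Rightarrow Y$ be a (total) multi-valued function. Let $P \subseteq X$ be the set of points $x \in X$ at which $F$ is continuous. (a) If $F(x)$ is compact for every $x \in X$, then $P$ is a $\Pi^0_2$ (i.e. $G_\delta$) subset of $X$. (b) If $Y$ is exhaustible by compact sets and $F(x)$ is closed for every $x \in X$, then $P$ is a $\Sigma^0_3$ subset of $X$.
   Context: A multi-valued function $F: X \Rightarrow Y$ assigns to each $x\in X$ a set $F(x)\subseteq Y$; it is identified with its graph $\{(x,y): y \in F(x)\}\subseteq X\times Y$, and all multi-valued functions are assumed total, i.e. $F(x)\neq\emptyset$ for all $x$. $F$ is continuous at $x$ if there is some $y \in F(x)$ such that for every $\varepsilon>0$ there is $\delta>0$ such that for every $x' \in B_p(x,\delta)$ there is $y' \in F(x')$ with $d(y,y')<\varepsilon$. A space $Y$ is exhaustible by compact sets if there are compact sets $K_n \subseteq Y$ ($n\in\omega$) with $K_n$ contained in the interior of $K_{n+1}$ for all $n$ and $Y=\bigcup_n K_n$. Borel hierarchy: $\Sigma^0_1$ = open sets; $\Sigma^0_{n+1}$ = countable unions $\bigcup_i A_i$ where each $X\setminus A_i\in\Sigma^0_{k_i}$ for some $k_i\le n$; $\Pi^0_n$ = complements of $\Sigma^0_n$ sets. Thus $\Pi^0_2$ = $G_\delta$ and $\Sigma^0_3$ = countable unions of $G_\delta$ sets. *)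

theory Defs
  imports "HOL-Analysis.Analysis"
begin

definition mv_continuous_at :: "('a::metric_space \<Rightarrow> 'b::metric_space set) \<Rightarrow> 'a \<Rightarrow> bool" where
  "mv_continuous_at F x \<longleftrightarrow>
     (\<exists>y \<in> F x. \<forall>\<epsilon>>0. \<exists>\<delta>>0. \<forall>x' \<in> ball x \<delta>. \<exists>y' \<in> F x'. dist y y' < \<epsilon>)"

definition separable_type :: "'a::metric_space itself \<Rightarrow> bool" where
  "separable_type _ \<longleftrightarrow> (\<exists>D::'a set. countable D \<and> closure D = UNIV)"

definition exhaustible_by_compact :: "'a::metric_space itself \<Rightarrow> bool" where
  "exhaustible_by_compact _ \<longleftrightarrow>
     (\<exists>K::nat \<Rightarrow> 'a set. (\<forall>n. compact (K n) \<and> K n \<subseteq> interior (K (Suc n))) \<and> \<Union>(range K) = UNIV)"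

definition Sigma02 :: "'a::topological_space set \<Rightarrow> bool" where
  "Sigma02 S \<longleftrightarrow> (\<exists>A::nat \<Rightarrow> 'a set. (\<forall>i. open (- A i)) \<and> S = \<Union>(range A))"

definition Pi02 :: "'a::topological_space set \<Rightarrow> bool" where
  "Pi02 S \<longleftrightarrow> Sigma02 (- S)"

definition Sigma03 :: "'a::topological_space set \<Rightarrow> bool" where
  "Sigma03 S \<longleftrightarrow> (\<exists>A::nat \<Rightarrow> 'a set. (\<forall>i. open (- A i) \<or> Sigma02 (- A i)) \<and> S = \<Union>(range A))"

end

theory Submission
  imports Defs
begin

definition Qs :: "('a::metric_space \<Rightarrow> 'b::metric_space set) \<Rightarrow> 'b set \<Rightarrow> real \<Rightarrow> 'a set" where
  "Qs F K e = {x. \<exists>y\<in>K. \<exists>\<delta>>0. \<forall>x'\<in>ball x \<delta>. \<exists>y'\<in>F x'. dist y y' < e}"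

lemma open_Qs: "open (Qs F K e)"
  unfolding open_contains_ball
proof
  fix x assume "x \<in> Qs F K e"
  then obtain y \<delta> where y: "y \<in> K" "\<delta> > 0" "\<forall>x'\<in>ball x \<delta>. \<exists>y'\<in>F x'. dist y y' < e"
    unfolding Qs_def by blast
  have "ball x \<delta> \<subseteq> Qs F K e"
  proof
    fix z assume z: "z \<in> ball x \<delta>"
    define d where "d = \<delta> - dist x z"
    have "d > 0" using z by (simp add: d_def)
    moreover have "ball z d \<subseteq> ball x \<delta>"
    proof
      fix w assume "w \<in> ball z d"
      hence "dist z w < d" by simp
      moreover have "dist x w \<le> dist x z + dist z w" by (rule dist_triangle)
      ultimately have "dist x w < \<delta>" unfolding d_def by linarith
      thus "w \<in> ball x \<delta>" by simp
    qed
    ultimately show "z \<in> Qs F K e" using y unfolding Qs_def by blast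
  qed
  then show "\<exists>r>0. ball x r \<subseteq> Qs F K e" using y(2) by blast
qed

lemma key:
  fixes F :: "'a::metric_space \<Rightarrow> 'b::metric_space set"
  assumes K: "compact K" and cl: "closed (F x)"
    and H: "\<forall>n. x \<in> Qs F K (1 / Suc n)"
  shows "mv_continuous_at F x"
proof -
  have "\<forall>n. \<exists>y. y \<in> K \<and> (\<exists>\<delta>>0. \<forall>x'\<in>ball x \<delta>. \<exists>y'\<in>F x'. dist y y' < 1 / Suc n)"
    using H unfolding Qs_def by blast
  from choice[OF this] obtain y where yy: "\<forall>n. y n \<in> K \<and> (\<exists>\<delta>>0. \<forall>x'\<in>ball x \<delta>. \<exists>y'\<in>F x'. dist (y n) y' < 1 / Suc n)"
    by blast
  have yK: "\<And>n. y n \<in> K" using yy by blast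
  have yP: "\<And>n. \<exists>\<delta>>0. \<forall>x'\<in>ball x \<delta>. \<exists>y'\<in>F x'. dist (y n) y' < 1 / Suc n"
    using yy by blast
  have yK': "\<forall>n. y n \<in> K" using yK by blast
  have ex: "\<exists>l\<in>K. \<exists>r. strict_mono r \<and> (y \<circ> r) \<longlonglongrightarrow> l"
  proof -
    have "(\<forall>n. y n \<in> K) \<longrightarrow> (\<exists>l\<in>K. \<exists>r. strict_mono r \<and> (y \<circ> r) \<longlonglongrightarrow> l)"
      using compact_imp_seq_compact[OF K] unfolding seq_compact_def by (rule spec)
    then show ?thesis using yK' by (rule mp)
  qed
  obtain l r where l: "l \<in> K" "strict_mono r" "(y \<circ> r) \<longlonglongrightarrow> l"
    using ex by (elim bexE exE conjE) (rule that)
  have pick: "\<exists>n. dist (y n) l < e/2 \<and> 1 / Suc n < e/2" if e: "e > 0" for e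
  proof -
    have "eventually (\<lambda>k. dist ((y \<circ> r) k) l < e/2) sequentially"
      using tendstoD[OF l(3), of "e/2"] e by simp
    moreover have "eventually (\<lambda>k. 1 / real (Suc (r k)) < e/2) sequentially"
    proof -
      have e2: "e/2 > 0" using e by simp
      from nat_approx_posE[OF e2] obtain N :: nat where N: "1 / real (Suc N) < e/2" by blast
      have "1 / real (Suc (r k)) < e/2" if "k \<ge> N" for k
      proof -
        have "N \<le> r k" using that seq_suble[OF l(2), of k] by simp
        hence "1 / real (Suc (r k)) \<le> 1 / real (Suc N)"
          by (intro divide_left_mono) auto
        thus ?thesis using N by linarith
      qed
      thus ?thesis unfolding eventually_sequentially by blast
    qed
    ultimately have "eventually (\<lambda>k. dist ((y \<circ> r) k) l < e/2 \<and> 1 / real (Suc (r k)) < e/2) sequentially"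
      by (rule eventually_conj)
    then obtain N where "\<forall>k\<ge>N. dist ((y \<circ> r) k) l < e/2 \<and> 1 / real (Suc (r k)) < e/2"
      unfolding eventually_sequentially by blast
    then have "dist ((y \<circ> r) N) l < e/2 \<and> 1 / real (Suc (r N)) < e/2" by blast
    thus ?thesis by (intro exI[of _ "r N"]) simp
  qed
  have lF: "l \<in> F x"
  proof -
    have "l \<in> closure (F x)"
      unfolding closure_approachable
    proof (intro allI impI)
      fix e :: real assume e: "e > 0"
      obtain n where n: "dist (y n) l < e/2" "1 / Suc n < e/2" using pick[OF e] by blast
      obtain \<delta> where dd: "\<delta> > 0" "\<forall>x'\<in>ball x \<delta>. \<exists>y'\<in>F x'. dist (y n) y' < 1 / Suc n"
        using yP by blast
      have "x \<in> ball x \<delta>" using dd(1) by simp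
      then obtain w where w: "w \<in> F x" "dist (y n) w < 1 / Suc n" using dd(2) by blast
      have "dist w l \<le> dist (y n) w + dist (y n) l" by (rule dist_triangle3)
      hence "dist w l < e" using w n by linarith
      thus "\<exists>w\<in>F x. dist w l < e" using w(1) by blast
    qed
    thus ?thesis using cl by simp
  qed
  show ?thesis unfolding mv_continuous_at_def
  proof (intro bexI[OF _ lF] allI impI)
    fix e :: real assume e: "e > 0"
    obtain n where n: "dist (y n) l < e/2" "1 / Suc n < e/2" using pick[OF e] by blast
    obtain \<delta> where d: "\<delta> > 0" "\<forall>x'\<in>ball x \<delta>. \<exists>y'\<in>F x'. dist (y n) y' < 1 / Suc n"
      using yP by blast
    have "\<forall>x'\<in>ball x \<delta>. \<exists>y'\<in>F x'. dist l y' < e"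
    proof
      fix x' assume "x' \<in> ball x \<delta>"
      then obtain y' where y': "y' \<in> F x'" "dist (y n) y' < 1 / Suc n" using d by blast
      have "dist l y' \<le> dist (y n) l + dist (y n) y'" by (rule dist_triangle3)
      hence "dist l y' < e" using y' n by linarith
      thus "\<exists>y'\<in>F x'. dist l y' < e" using y'(1) by blast
    qed
    thus "\<exists>\<delta>>0. \<forall>x'\<in>ball x \<delta>. \<exists>y'\<in>F x'. dist l y' < e" using d(1) by blast
  qed
qed

lemma cont_Qs:
  assumes "mv_continuous_at F x" "e > 0"
  shows "\<exists>y\<in>F x. \<forall>K. y \<in> K \<longrightarrow> x \<in> Qs F K e"
  using assms unfolding mv_continuous_at_def Qs_def by blast

theorem theorem2p1:
  fixes F :: "'a::metric_space \<Rightarrow> 'b::metric_space set"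
  assumes sep: "separable_type TYPE('b)"
    and total: "\<forall>x. F x \<noteq> {}"
  shows "((\<forall>x. compact (F x)) \<longrightarrow> Pi02 {x. mv_continuous_at F x})
       \<and> ((exhaustible_by_compact TYPE('b) \<and> (\<forall>x. closed (F x))) \<longrightarrow> Sigma03 {x. mv_continuous_at F x})"
proof (intro conjI impI)
  assume cp: "\<forall>x. compact (F x)"
  define Q where "Q n = Qs F UNIV (1 / Suc n)" for n
  have eq: "{x. mv_continuous_at F x} = (\<Inter>n. Q n)"
  proof (intro equalityI subsetI)
    fix x assume "x \<in> {x. mv_continuous_at F x}"
    then have c: "mv_continuous_at F x" by simp
    show "x \<in> (\<Inter>n. Q n)"
    proof
      fix n
      have "(0::real) < 1 / Suc n" by simp
      from cont_Qs[OF c this] show "x \<in> Q n" unfolding Q_def by blast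
    qed
  next
    fix x assume x: "x \<in> (\<Inter>n. Q n)"
    have "x \<in> Qs F (F x) (1 / Suc n)" for n
    proof -
      have "x \<in> Q (2*n+1)" using x by blast
      then obtain y \<delta> where d: "\<delta> > 0" "\<forall>x'\<in>ball x \<delta>. \<exists>y'\<in>F x'. dist y y' < 1 / Suc (2*n+1)"
        unfolding Q_def Qs_def by blast
      have "x \<in> ball x \<delta>" using d(1) by simp
      then obtain z where z: "z \<in> F x" "dist y z < 1 / Suc (2*n+1)" using d(2) by blast
      have h: "1 / real (Suc (2*n+1)) + 1 / real (Suc (2*n+1)) = 1 / real (Suc n)"
        by (simp add: field_simps)
      have "\<forall>x'\<in>ball x \<delta>. \<exists>y'\<in>F x'. dist z y' < 1 / Suc n"
      proof
        fix x' assume "x' \<in> ball x \<delta>"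
        then obtain y' where y': "y' \<in> F x'" "dist y y' < 1 / Suc (2*n+1)" using d by blast
        have "dist z y' \<le> dist y z + dist y y'" by (rule dist_triangle3)
        hence "dist z y' < 1 / Suc n" using y' z h by linarith
        thus "\<exists>y'\<in>F x'. dist z y' < 1 / Suc n" using y'(1) by blast
      qed
      thus ?thesis unfolding Qs_def using z(1) d(1) by blast
    qed
    moreover have "compact (F x)" using cp by blast
    ultimately have "mv_continuous_at F x" using key[of "F x" F x] compact_imp_closed by blast
    then show "x \<in> {x. mv_continuous_at F x}" by simp
  qed
  show "Pi02 {x. mv_continuous_at F x}"
    unfolding Pi02_def Sigma02_def
    by (rule exI[of _ "\<lambda>n. - Q n"]) (simp add: eq Q_def open_Qs)
next
  assume a: "exhaustible_by_compact TYPE('b) \<and> (\<forall>x. closed (F x))"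
  then obtain K :: "nat \<Rightarrow> 'b set" where K: "\<And>n. compact (K n)" "\<Union>(range K) = UNIV"
    unfolding exhaustible_by_compact_def by blast
  define A where "A m = (\<Inter>n. Qs F (K m) (1 / Suc n))" for m
  have eq: "{x. mv_continuous_at F x} = (\<Union>m. A m)"
  proof (intro equalityI subsetI)
    fix x assume "x \<in> {x. mv_continuous_at F x}"
    then obtain y where y: "y \<in> F x" "\<forall>\<epsilon>>0. \<exists>\<delta>>0. \<forall>x' \<in> ball x \<delta>. \<exists>y' \<in> F x'. dist y y' < \<epsilon>"
      unfolding mv_continuous_at_def by blast
    obtain m where m: "y \<in> K m" using K(2) by blast
    have "x \<in> Qs F (K m) (1 / Suc n)" for n
    proof -
      have "(0::real) < 1 / Suc n" by simp
      then obtain \<delta> where "\<delta>>0" "\<forall>x' \<in> ball x \<delta>. \<exists>y' \<in> F x'. dist y y' < 1 / Suc n"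
        using y(2) by blast
      then show ?thesis unfolding Qs_def using m by blast
    qed
    then have "x \<in> A m" unfolding A_def by blast
    then show "x \<in> (\<Union>m. A m)" by blast
  next
    fix x assume "x \<in> (\<Union>m. A m)"
    then obtain m where "x \<in> A m" by blast
    then have "\<forall>n. x \<in> Qs F (K m) (1 / Suc n)" unfolding A_def by blast
    moreover have "closed (F x)" using a by blast
    ultimately have "mv_continuous_at F x" using key[of "K m" F x] K(1) by blast
    then show "x \<in> {x. mv_continuous_at F x}" by simp
  qed
  show "Sigma03 {x. mv_continuous_at F x}"
    unfolding Sigma03_def
  proof (rule exI[of _ A], intro conjI allI disjI2)
    fix i
    show "Sigma02 (- A i)" unfolding Sigma02_def A_def
      by (rule exI[of _ "\<lambda>n. - Qs F (K i) (1 / Suc n)"]) (simp add: open_Qs)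
  qed (rule eq)
qed

end
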